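(* For all integers $a,b,c,d,e$: $$(F_{d-a}F_{e-b}-F_{e-a}F_{d-b})F_{b-c}=(F_{d-c}F_{e-b}-F_{e-c}F_{d-b})F_{b-a},$$ $$(J_{d-a}J_{e-b}-J_{e-a}J_{d-b})J_{b-c}=(J_{d-c}J_{e-b}-J_{e-c}J_{d-b})J_{b-a},$$ $$(P_{d-a}P_{e-b}-P_{e-a}P_{d-b})P_{b-c}=(P_{d-c}P_{e-b}-P_{e-c}P_{d-b})P_{b-a}.$$
   Context: All sequences are indexed by $n\in\mathbb Z$. Fibonacci numbers $F_n$: $F_n=F_{n-1}+F_{n-2}$ for all $n\in\mathbb Z$, $F_0=0,F_1=1$ (so $F_{-n}=(-1)^{n-1}F_n$). Jacobsthal numbers $J_n$: $J_n=J_{n-1}+2J_{n-2}$ for all $n\in\mathbb Z$, $J_0=0,J_1=1$ (so $J_{-n}=(-1)^{n-1}2^{-n}J_n$, rational for negative index). Pell numbers $P_n$: $P_n=2P_{n-1}+P_{n-2}$ for all $n\in\mathbb Z$, $P_0=0,P_1=1$ (so $P_{-n}=(-1)^{n-1}P_n$). *)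

theory Defs
  imports Complex_Main
begin

fun fibn :: "nat \<Rightarrow> int" where
  "fibn 0 = 0" | "fibn (Suc 0) = 1" | "fibn (Suc (Suc n)) = fibn (Suc n) + fibn n"

fun jacn :: "nat \<Rightarrow> int" where
  "jacn 0 = 0" | "jacn (Suc 0) = 1" | "jacn (Suc (Suc n)) = jacn (Suc n) + 2 * jacn n"

fun pelln :: "nat \<Rightarrow> int" where
  "pelln 0 = 0" | "pelln (Suc 0) = 1" | "pelln (Suc (Suc n)) = 2 * pelln (Suc n) + pelln n"

text \<open>Extension to all integer indices, using the unique extension of the
recurrence backwards (as stated in the context):
F_{-n} = (-1)^(n-1) F_n, J_{-n} = (-1)^(n-1) 2^(-n) J_n, P_{-n} = (-1)^(n-1) P_n.\<close>

definition F :: "int \<Rightarrow> int" where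
  "F n = (if n \<ge> 0 then fibn (nat n) else (-1) ^ (nat (-n) - 1) * fibn (nat (-n)))"

definition J :: "int \<Rightarrow> real" where
  "J n = (if n \<ge> 0 then real_of_int (jacn (nat n))
          else (-1) ^ (nat (-n) - 1) * real_of_int (jacn (nat (-n))) / 2 ^ nat (-n))"

definition P :: "int \<Rightarrow> int" where
  "P n = (if n \<ge> 0 then pelln (nat n) else (-1) ^ (nat (-n) - 1) * pelln (nat (-n)))"

end

theory Submission
  imports Defs
begin

definition G :: "real \<Rightarrow> real \<Rightarrow> int \<Rightarrow> real" where
  "G x y n = (x powi n - y powi n) / (x - y)"

lemma binet_nat:
  fixes s :: "nat \<Rightarrow> real"
  assumes s0: "s 0 = 0" and s1: "s 1 = 1"
    and rec: "\<And>n. s (Suc (Suc n)) = p * s (Suc n) + q * s n"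
    and hp: "x + y = p" and hq: "x * y = - q" and ne: "x \<noteq> y"
  shows "s n = (x ^ n - y ^ n) / (x - y)"
proof (induction n rule: less_induct)
  case (less n)
  show ?case
  proof (cases n)
    case 0 then show ?thesis using s0 by simp
  next
    case (Suc m)
    show ?thesis
    proof (cases m)
      case 0 then show ?thesis using s1 Suc ne by simp
    next
      case (Suc k)
      have e1: "s (Suc k) = (x ^ Suc k - y ^ Suc k) / (x - y)" using less Suc \<open>n = Suc m\<close> by simp
      have e2: "s k = (x ^ k - y ^ k) / (x - y)" using less Suc \<open>n = Suc m\<close> by simp
      have d: "x - y \<noteq> 0" using ne by simp
      have "s n = p * s (Suc k) + q * s k" using rec Suc \<open>n = Suc m\<close> by simp
      also have "\<dots> = (x ^ Suc (Suc k) - y ^ Suc (Suc k)) / (x - y)"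
      proof -
        have qq: "q = - (x*y)" using hq by simp
        show ?thesis unfolding e1 e2 hp[symmetric] qq using d
          by (simp add: divide_simps) (simp add: algebra_simps)
      qed
      finally show ?thesis using Suc \<open>n = Suc m\<close> by simp
    qed
  qed
qed

lemma G_nat: "G x y (int k) = (x ^ k - y ^ k) / (x - y)"
  unfolding G_def by simp

lemma G_neg:
  assumes "x \<noteq> 0" "y \<noteq> 0" "x * y = - q"
  shows "G x y (- int k) = - G x y (int k) / (- q) ^ k"
  unfolding G_def using assms
  by (simp add: power_int_minus field_simps flip: power_mult_distrib)
     (simp add: divide_simps; simp add: algebra_simps)

lemma abs_ident:
  fixes Aa Ab Ac Ad Ae Ba Bb Bc Bd Be D :: real
  assumes "Aa \<noteq> 0" "Ab \<noteq> 0" "Ac \<noteq> 0" "Ad \<noteq> 0" "Ae \<noteq> 0"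
    "Ba \<noteq> 0" "Bb \<noteq> 0" "Bc \<noteq> 0" "Bd \<noteq> 0" "Be \<noteq> 0" "D \<noteq> 0"
  shows "(((Ad/Aa - Bd/Ba)/D) * ((Ae/Ab - Be/Bb)/D) - ((Ae/Aa - Be/Ba)/D) * ((Ad/Ab - Bd/Bb)/D)) * ((Ab/Ac - Bb/Bc)/D)
   = (((Ad/Ac - Bd/Bc)/D) * ((Ae/Ab - Be/Bb)/D) - ((Ae/Ac - Be/Bc)/D) * ((Ad/Ab - Bd/Bb)/D)) * ((Ab/Aa - Bb/Ba)/D)"
  using assms by (simp add: divide_simps) (simp add: algebra_simps)

lemma G_ident:
  assumes "x \<noteq> 0" "y \<noteq> 0" "x \<noteq> y"
  shows "(G x y (d-a) * G x y (e-b) - G x y (e-a) * G x y (d-b)) * G x y (b-c)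
       = (G x y (d-c) * G x y (e-b) - G x y (e-c) * G x y (d-b)) * G x y (b-a)"
proof -
  have px: "\<And>i j. x powi (i - j) = x powi i / x powi j" using assms by (simp add: power_int_diff)
  have py: "\<And>i j. y powi (i - j) = y powi i / y powi j" using assms by (simp add: power_int_diff)
  have d: "x - y \<noteq> 0" using assms by simp
  show ?thesis unfolding G_def px py
    by (rule abs_ident) (use assms d in auto)
qed

lemma neg_sign: "k > 0 \<Longrightarrow> ((-1::real) ^ (k - 1)) * t = - t / (-1) ^ k"
  by (cases k) (auto simp: field_simps)

lemma int_cases_neg: "(\<And>k. n = int k \<Longrightarrow> R) \<Longrightarrow> (\<And>k. k > 0 \<Longrightarrow> n = - int k \<Longrightarrow> R) \<Longrightarrow> R"
  by (metis int_cases of_nat_0_less_iff zero_less_Suc)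

lemma F_G: "real_of_int (F n) = G ((1 + sqrt 5)/2) ((1 - sqrt 5)/2) n"
proof -
  let ?x = "(1 + sqrt 5)/2" and ?y = "(1 - sqrt 5)/2"
  have xy: "?x * ?y = - 1" by (simp add: field_simps)
  have ne: "?x \<noteq> ?y" by simp
  have x0: "?x \<noteq> 0" using xy by auto
  have y0: "?y \<noteq> 0" using xy by auto
  have nat: "real_of_int (fibn k) = G ?x ?y (int k)" for k
    unfolding G_nat
    by (rule binet_nat[where s="\<lambda>n. real_of_int (fibn n)" and p=1 and q=1]) (use xy in \<open>simp_all add: field_simps\<close>)
  show ?thesis
  proof (cases n rule: int_cases_neg)
    case (1 k) then show ?thesis using nat by (simp add: F_def)
  next
    case (2 k)
    have "G ?x ?y n = - G ?x ?y (int k) / (- 1) ^ k" using G_neg[OF x0 y0 xy] 2 by simp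
    also have "\<dots> = (-1) ^ (k - 1) * real_of_int (fibn k)" using neg_sign[OF 2(1)] nat by simp
    finally show ?thesis using 2 by (simp add: F_def)
  qed
qed

lemma P_G: "real_of_int (P n) = G (1 + sqrt 2) (1 - sqrt 2) n"
proof -
  let ?x = "1 + sqrt 2" and ?y = "1 - sqrt 2"
  have xy: "?x * ?y = - 1" by (simp add: field_simps)
  have ne: "?x \<noteq> ?y" by simp
  have x0: "?x \<noteq> 0" using xy by auto
  have y0: "?y \<noteq> 0" using xy by auto
  have nat: "real_of_int (pelln k) = G ?x ?y (int k)" for k
    unfolding G_nat
    by (rule binet_nat[where s="\<lambda>n. real_of_int (pelln n)" and p=2 and q=1]) (use xy in simp_all)
  show ?thesis
  proof (cases n rule: int_cases_neg)
    case (1 k) then show ?thesis using nat by (simp add: P_def)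
  next
    case (2 k)
    have "G ?x ?y n = - G ?x ?y (int k) / (- 1) ^ k" using G_neg[OF x0 y0 xy] 2 by simp
    also have "\<dots> = (-1) ^ (k - 1) * real_of_int (pelln k)" using neg_sign[OF 2(1)] nat by simp
    finally show ?thesis using 2 by (simp add: P_def)
  qed
qed

lemma J_G: "J n = G 2 (-1) n"
proof -
  have xy: "2 * (-1::real) = - 2" by simp
  have nat: "real_of_int (jacn k) = G 2 (-1) (int k)" for k
    unfolding G_nat
    by (rule binet_nat[where s="\<lambda>n. real_of_int (jacn n)" and p=1 and q=2]) simp_all
  show ?thesis
  proof (cases n rule: int_cases_neg)
    case (1 k) then show ?thesis using nat by (simp add: J_def)
  next
    case (2 k)
    have "G 2 (-1) n = - G 2 (-1) (int k) / (- 2) ^ k" using G_neg[of 2 "-1" 2] 2 by simp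
    also have "\<dots> = (-1) ^ (k - 1) * real_of_int (jacn k) / 2 ^ k"
      using neg_sign[OF 2(1), of "real_of_int (jacn k)"] nat
      by (simp add: power_minus[of 2] field_simps)
    finally show ?thesis using 2 by (simp add: J_def)
  qed
qed

theorem corollary2:
  fixes a b c d e :: int
  shows "((F (d-a) * F (e-b) - F (e-a) * F (d-b)) * F (b-c) = (F (d-c) * F (e-b) - F (e-c) * F (d-b)) * F (b-a)) \<and>
    ((J (d-a) * J (e-b) - J (e-a) * J (d-b)) * J (b-c) = (J (d-c) * J (e-b) - J (e-c) * J (d-b)) * J (b-a)) \<and>
    ((P (d-a) * P (e-b) - P (e-a) * P (d-b)) * P (b-c) = (P (d-c) * P (e-b) - P (e-c) * P (d-b)) * P (b-a))"
proof (intro conjI)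
  have s5: "sqrt (5::real) > 1" by (simp add: real_less_rsqrt)
  have x0: "(1 + sqrt 5)/2 \<noteq> 0" "(1 - sqrt 5)/2 \<noteq> 0" "(1 + sqrt 5)/2 \<noteq> (1 - sqrt 5)/2"
    using s5 by (simp_all add: field_simps; linarith)+
  have "real_of_int ((F (d-a) * F (e-b) - F (e-a) * F (d-b)) * F (b-c)) = real_of_int ((F (d-c) * F (e-b) - F (e-c) * F (d-b)) * F (b-a))"
    unfolding of_int_mult of_int_diff F_G by (rule G_ident[OF x0])
  then show "(F (d-a) * F (e-b) - F (e-a) * F (d-b)) * F (b-c) = (F (d-c) * F (e-b) - F (e-c) * F (d-b)) * F (b-a)"
    by (simp only: of_int_eq_iff)
  show "(J (d-a) * J (e-b) - J (e-a) * J (d-b)) * J (b-c) = (J (d-c) * J (e-b) - J (e-c) * J (d-b)) * J (b-a)"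
    unfolding J_G by (rule G_ident) auto
  have y0: "1 + sqrt 2 \<noteq> 0" "1 - sqrt 2 \<noteq> 0" "1 + sqrt (2::real) \<noteq> 1 - sqrt 2"
    using real_sqrt_ge_zero[of 2] by (simp_all add: field_simps; linarith)+
  have "real_of_int ((P (d-a) * P (e-b) - P (e-a) * P (d-b)) * P (b-c)) = real_of_int ((P (d-c) * P (e-b) - P (e-c) * P (d-b)) * P (b-a))"
    unfolding of_int_mult of_int_diff P_G by (rule G_ident[OF y0])
  then show "(P (d-a) * P (e-b) - P (e-a) * P (d-b)) * P (b-c) = (P (d-c) * P (e-b) - P (e-c) * P (d-b)) * P (b-a)"
    by (simp only: of_int_eq_iff)
qed

end
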